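(* Let $X\subset\mathbb{R}^n$ be a nonempty compact convex set with diameter $D_X:=\max_{x,y\in X}\|x-y\|$ (Euclidean norm). Let $u\in X$, $g\in\mathbb{R}^n$, $\beta>0$, $\eta>0$, $\phi(x):=\langle g,x\rangle+\frac{\beta}{2}\|x-u\|^2$, and consider the ACGM procedure described in the context. Then, if the procedure terminates with output $u^+$, $$\max_{x\in X}\langle\nabla\phi(u^+),u^+-x\rangle\le\eta .$$ Moreover, if $\delta^t=\sigma\beta D_X^2/t$ for some $\sigma\ge0$ and $\alpha^t$ is chosen such that $$\phi(u^t)\le\phi\Big(\frac{t-1}{t+1}u^{t-1}+\frac{2}{t+1}v^t\Big)$$ for every $t$, then for any $t\ge1$ (for which $v^{t+1}$ is computed) $$\min_{j=1,\dots,t+1}\langle\nabla\phi(u^{j-1}),u^{j-1}-v^j\rangle\le\min_{j=1,\dots,t+1}\max_{x\in X}\langle\nabla\phi(u^{j-1}),u^{j-1}-x\rangle\le\frac{6(\sigma+1)\beta D_X^2}{t},$$ and the ACGM procedure terminates after at most $T:=1+\big\lceil (7\sigma+6)\beta D_X^2/\eta\big\rceil$ iterations.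
   Context: Note $\nabla\phi(x)=g+\beta(x-u)$. ACGM (approximate conditional gradient method) procedure for $\min_{x\in X}\phi(x)$, with input $u,g,\beta,\eta$ and a sequence of tolerances $\delta^t\ge0$: set $u^0:=u$. For $t=1,2,\dots$ (iteration $t$): compute $v^t\in X$ such that $\langle\nabla\phi(u^{t-1}),v^t-x\rangle\le\delta^t$ for all $x\in X$ (an approximate solution of the linear subproblem $\min_{x\in X}\langle\nabla\phi(u^{t-1}),x\rangle$). If $\langle\nabla\phi(u^{t-1}),u^{t-1}-v^t\rangle\le\eta-\delta^t$, stop and output $u^+:=u^{t-1}$. Otherwise set $u^t:=(1-\alpha^t)u^{t-1}+\alpha^t v^t$ with some step size $\alpha^t\in[0,1]$, and continue. *)

theory Defs
  imports "HOL-Analysis.Analysis"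
begin

definition acgm_phi :: "real^'n \<Rightarrow> real \<Rightarrow> real^'n \<Rightarrow> real^'n \<Rightarrow> real" where
  "acgm_phi g \<beta> u x = g \<bullet> x + \<beta> / 2 * (norm (x - u))\<^sup>2"

definition acgm_grad :: "real^'n \<Rightarrow> real \<Rightarrow> real^'n \<Rightarrow> real^'n \<Rightarrow> real^'n" where
  "acgm_grad g \<beta> u x = g + \<beta> *\<^sub>R (x - u)"

definition acgm_gap :: "real^'n \<Rightarrow> real \<Rightarrow> real^'n \<Rightarrow> (nat \<Rightarrow> real^'n) \<Rightarrow> (nat \<Rightarrow> real^'n) \<Rightarrow> nat \<Rightarrow> real" where
  "acgm_gap g \<beta> u us vs t = acgm_grad g \<beta> u (us (t - 1)) \<bullet> (us (t - 1) - vs t)"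

definition acgm_stop :: "real^'n \<Rightarrow> real \<Rightarrow> real^'n \<Rightarrow> real \<Rightarrow> (nat \<Rightarrow> real)
    \<Rightarrow> (nat \<Rightarrow> real^'n) \<Rightarrow> (nat \<Rightarrow> real^'n) \<Rightarrow> nat \<Rightarrow> bool" where
  "acgm_stop g \<beta> u \<eta> \<delta> us vs t \<longleftrightarrow> acgm_gap g \<beta> u us vs t \<le> \<eta> - \<delta> t"

text \<open>Conditions on v^t are only imposed if iteration t is reached (no stop in iterations 1..t-1);
  conditions on alpha^t, u^t only if iteration t did not stop either.\<close>

definition acgm_trace :: "(real^'n) set \<Rightarrow> real^'n \<Rightarrow> real^'n \<Rightarrow> real \<Rightarrow> real \<Rightarrow> (nat \<Rightarrow> real)
    \<Rightarrow> (nat \<Rightarrow> real) \<Rightarrow> (nat \<Rightarrow> real^'n) \<Rightarrow> (nat \<Rightarrow> real^'n) \<Rightarrow> bool" where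
  "acgm_trace X u g \<beta> \<eta> \<delta> \<alpha> us vs \<longleftrightarrow>
     us 0 = u \<and>
     (\<forall>t\<ge>1. (\<forall>j\<in>{1..<t}. \<not> acgm_stop g \<beta> u \<eta> \<delta> us vs j) \<longrightarrow>
        vs t \<in> X \<and> (\<forall>x\<in>X. acgm_grad g \<beta> u (us (t - 1)) \<bullet> (vs t - x) \<le> \<delta> t)) \<and>
     (\<forall>t\<ge>1. (\<forall>j\<in>{1..t}. \<not> acgm_stop g \<beta> u \<eta> \<delta> us vs j) \<longrightarrow>
        \<alpha> t \<in> {0..1} \<and> us t = (1 - \<alpha> t) *\<^sub>R us (t - 1) + \<alpha> t *\<^sub>R vs t)"

end

theory Submission
  imports Defs
begin


lemma phi_expand:
  "acgm_phi g \<beta> u (a + d) = acgm_phi g \<beta> u a + acgm_grad g \<beta> u a \<bullet> d + \<beta>/2 * (norm d)\<^sup>2"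
  unfolding acgm_phi_def acgm_grad_def power2_norm_eq_inner
  by (simp add: inner_add_left inner_add_right inner_diff_left inner_diff_right algebra_simps inner_commute)

lemma k_arith:
  fixes t :: nat assumes "t \<ge> 1"
  shows "2 * real t * (real t + 2) \<le> real (max 2 ((t+1) div 2)) * (7 * real t + 12 - 6 * real (max 2 ((t+1) div 2)))"
proof -
  obtain m where "t = 2*m \<or> t = 2*m+1" by (metis oddE evenE)
  then show ?thesis
  proof
    assume t: "t = 2*m"
    show ?thesis
    proof (cases "m = 1")
      case True then show ?thesis using t by simp
    next
      case False
      then have "m \<ge> 2" using t assms by auto
      then have "max 2 ((t+1) div 2) = m" using t by auto
      then show ?thesis using t \<open>m\<ge>2\<close> by (simp add: algebra_simps)
    qed
  next
    assume t: "t = 2*m+1"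
    show ?thesis
    proof (cases "m = 0")
      case True then show ?thesis using t by simp
    next
      case False
      then have "max 2 ((t+1) div 2) = m+1" using t by auto
      then show ?thesis using t by (simp add: algebra_simps)
    qed
  qed
qed

lemma abstract_rate:
  fixes h s :: "nat \<Rightarrow> real" and C :: real and t :: nat
  assumes C: "C \<ge> 0" and t: "t \<ge> 1"
    and rec: "\<And>j. 1 \<le> j \<Longrightarrow> j \<le> t+1 \<Longrightarrow>
       h j \<le> h (j-1) - 2/(real j+1) * s j + 2*C/(real j*(real j+1))"
    and low: "\<And>j. 1 \<le> j \<Longrightarrow> j \<le> t+1 \<Longrightarrow> h (j-1) \<le> s j"
    and fin: "0 \<le> h (t+1)"
  shows "\<exists>j\<in>{1..t+1}. s j \<le> 6*C/real t"
proof -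
  have hb: "h j \<le> 2*C/(real j+1)" if "1 \<le> j" "j \<le> t+1" for j
    using that
  proof (induction j)
    case 0 then show ?case by simp
  next
    case (Suc n)
    show ?case
    proof (cases "n = 0")
      case True
      then show ?thesis using rec[of 1] low[of 1] t by simp
    next
      case False
      define x where "x = real n"
      have x1: "x \<ge> 1" using False x_def by simp
      have IH: "h n \<le> 2*C/(x+1)" using Suc False x_def by simp
      have r: "h (Suc n) \<le> h n - 2/(x+2) * s (Suc n) + 2*C/((x+1)*(x+2))"
        using rec[of "Suc n"] Suc.prems x_def by (simp add: add.commute)
      have l: "h n \<le> s (Suc n)" using low[of "Suc n"] Suc.prems by simp
      have "2/(x+2) * h n \<le> 2/(x+2) * s (Suc n)"
        using l x1 by (intro mult_left_mono) auto
      then have "h (Suc n) \<le> h n - 2/(x+2) * h n + 2*C/((x+1)*(x+2))"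
        using r by linarith
      also have "h n - 2/(x+2) * h n = h n * (x/(x+2))"
        using x1 by (simp add: field_simps)
      also have "h n * (x/(x+2)) \<le> 2*C/(x+1) * (x/(x+2))"
        using IH x1 by (intro mult_right_mono) auto
      also have "2*C/(x+1) * (x/(x+2)) + 2*C/((x+1)*(x+2)) = 2*C/(x+2)"
      proof -
        have "x+1 > 0 \<and> x+2 > 0" using x1 by auto
        then show ?thesis by (simp add: divide_simps) (simp add: algebra_simps)
      qed
      finally show ?thesis using x_def by (simp add: add.commute)
    qed
  qed
  show ?thesis
  proof (rule ccontr)
    assume "\<not> ?thesis"
    then have sM: "\<And>j. 1 \<le> j \<Longrightarrow> j \<le> t+1 \<Longrightarrow> s j > 6*C/real t"
      by (meson atLeastAtMost_iff not_le)
    define M where "M = 6*C/real t"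
    have M0: "M \<ge> 0" using C t M_def by simp
    define k where "k = max 2 ((t+1) div 2)"
    have k2: "k \<ge> 2" and kt: "k \<le> t+1" using t unfolding k_def by auto
    define B where "B i = 2*C/real k + 2*C*(1/real k - 1/(real k + real i)) - 2*M*real i/(real t+2)" for i :: nat
    have step: "h (k+i) \<le> B i - 2*M/(real t+2) + 2*C*(1/(real k+real i) - 1/(real k + real i+1))"
      if "k+i \<le> t+1" "h (k-1+i) \<le> B i" for i
    proof -
      define j where "j = k+i"
      have j1: "1 \<le> j" "j \<le> t+1" using that k2 j_def by auto
      have jm: "j - 1 = k-1+i" using j_def k2 by simp
      have "2/(real t+2) * M \<le> 2/(real j+1) * M"
        using M0 j1 by (intro mult_right_mono) (auto simp: field_simps)
      also have "\<dots> \<le> 2/(real j+1) * s j"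
        using sM[OF j1] M_def by (intro mult_left_mono) auto
      finally have a: "2/(real t+2) * M \<le> 2/(real j+1) * s j" .
      have b: "2*C/(real j*(real j+1)) = 2*C*(1/real j - 1/(real j+1))"
        using j1 by (simp add: field_simps)
      have "h j \<le> h (j-1) - 2/(real j+1) * s j + 2*C/(real j*(real j+1))"
        using rec[OF j1] .
      moreover have "2/(real t+2) * M = 2*M/(real t+2)" by simp
      moreover have "real j = real k + real i" using j_def by simp
      moreover have "h (j-1) \<le> B i" using that(2) jm by simp
      ultimately have "h j \<le> B i - 2*M/(real t+2) + 2*C*(1/(real j) - 1/(real j+1))"
        using a b by linarith
      then show ?thesis using j_def by simp
    qed
    have ind: "h (k-1+i) \<le> B i" if "k-1+i \<le> t" for i
      using that
    proof (induction i)
      case 0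
      have "h (k-1) \<le> 2*C/(real (k-1)+1)" using hb[of "k-1"] k2 kt by simp
      then show ?case using k2 by (simp add: B_def of_nat_diff)
    next
      case (Suc i)
      have "h (k+i) \<le> B i - 2*M/(real t+2) + 2*C*(1/(real k+real i) - 1/(real k + real i+1))"
        using step[of i] Suc k2 by simp
      also have "\<dots> = B (Suc i)" unfolding B_def by (simp add: algebra_simps add_divide_distrib)
      finally show ?case using k2 by (simp add: add.commute)
    qed
    define i0 where "i0 = t+1-k"
    have ht: "h (k-1+i0) \<le> B i0" using ind[of i0] i0_def k2 kt by simp
    have ti: "k + i0 = t+1" using i0_def kt by simp
    have j1: "1 \<le> t+1" "t+1 \<le> t+1" by auto
    define j where "j = t+1"
    have j1': "1 \<le> j" "j \<le> t+1" using j_def by auto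
    have a: "2/(real j+1) * M < 2/(real j+1) * s j"
      using sM[OF j1'] M_def by (intro mult_strict_left_mono) auto
    have r: "h j \<le> h (j-1) - 2/(real j+1) * s j + 2*C/(real j*(real j+1))"
      using rec[OF j1'] .
    have c: "2/(real j+1) * M = 2*M/(real t+2)" using j_def by simp
    have rj: "real j = real k + real i0" using ti j_def by simp
    have b: "2*C/(real j*(real j+1)) = 2*C*(1/(real k+real i0) - 1/(real k + real i0+1))"
      unfolding rj[symmetric] using j1' by (simp add: field_simps)
    have hj: "h (j-1) \<le> B i0" using ht ti j_def k2 by (simp add: add.commute)
    have "h j < B i0 - 2*M/(real t+2) + 2*C*(1/(real k+real i0) - 1/(real k + real i0+1))"
      using a r c b hj by linarith
    also have "\<dots> = B (Suc i0)" unfolding B_def by (simp add: algebra_simps add_divide_distrib)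
    also have "B (Suc i0) \<le> 0"
    proof -
      have n: "real (Suc i0) = real t + 2 - real k" using ti by simp
      have kk: "2 * real t * (real t + 2) \<le> real k * (7 * real t + 12 - 6 * real k)"
        using k_arith[OF t] k_def by simp
      have kpos: "real k > 0" using k2 by simp
      have tpos: "real t > 0" using t by simp
      have "B (Suc i0) * (real t * (real t + 2) * real k) = 2*C*(2*real t*(real t+2) - real k*(7*real t+12-6*real k))"
      proof -
        have e: "\<And>K T C :: real. K > 0 \<Longrightarrow> T > 0 \<Longrightarrow> (2*C/K + 2*C*(1/K - 1/(K + (T+2-K))) - 2*(6*C/T)*(T+2-K)/(T+2)) * (T*(T+2)*K) = 2*C*(2*T*(T+2) - K*(7*T+12-6*K))"
          by (simp add: divide_simps) (simp add: algebra_simps)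
        show ?thesis unfolding B_def M_def n using e[OF kpos tpos, of C] by simp
      qed
      also have "\<dots> \<le> 0" using kk C by (simp add: mult_nonneg_nonpos)
      finally have "B (Suc i0) * (real t * (real t + 2) * real k) \<le> 0" .
      moreover have "real t * (real t + 2) * real k > 0" using kpos tpos by simp
      ultimately show ?thesis by (meson mult_le_0_iff not_le)
    qed
    finally show False using fin j_def by simp
  qed
qed

lemma step_arith: fixes J \<sigma> \<beta> D :: real assumes "J \<ge> 1" "\<beta> > 0" "\<sigma> \<ge> 0"
 shows "2/(J+1)*(\<sigma>*\<beta>*D\<^sup>2/J) + \<beta>/2*((2/(J+1))\<^sup>2*D\<^sup>2) \<le> 2*((\<sigma>+1)*(\<beta>*D\<^sup>2))/(J*(J+1))"
proof -
  have L: "\<beta>*D\<^sup>2 \<ge> 0" using assms by simp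
  have "2*(\<beta>*D\<^sup>2)/((J+1)*(J+1)) \<le> 2*(\<beta>*D\<^sup>2)/(J*(J+1))"
    using assms L by (intro divide_left_mono mult_right_mono mult_pos_pos) auto
  moreover have "2/(J+1)*(\<sigma>*\<beta>*D\<^sup>2/J) + \<beta>/2*((2/(J+1))\<^sup>2*D\<^sup>2) = 2*\<sigma>*(\<beta>*D\<^sup>2)/(J*(J+1)) + 2*(\<beta>*D\<^sup>2)/((J+1)*(J+1))"
    using assms by (simp add: power2_eq_square field_simps)
  moreover have "2*((\<sigma>+1)*(\<beta>*D\<^sup>2))/(J*(J+1)) = 2*\<sigma>*(\<beta>*D\<^sup>2)/(J*(J+1)) + 2*(\<beta>*D\<^sup>2)/(J*(J+1))"
    by (simp add: add_divide_distrib[symmetric] algebra_simps)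
  ultimately show ?thesis by linarith
qed

theorem mainTheorem2:
  fixes X :: "(real^'n) set" and u g :: "real^'n" and \<beta> \<eta> :: real
    and \<delta> \<alpha> :: "nat \<Rightarrow> real" and us vs :: "nat \<Rightarrow> real^'n"
  assumes "X \<noteq> {}" and "compact X" and "convex X"
    and "u \<in> X" and "\<beta> > 0" and "\<eta> > 0"
    and "\<forall>t\<ge>1. \<delta> t \<ge> 0"
    and trace: "acgm_trace X u g \<beta> \<eta> \<delta> \<alpha> us vs"
  shows "(\<forall>t\<ge>1. (\<forall>j\<in>{1..<t}. \<not> acgm_stop g \<beta> u \<eta> \<delta> us vs j) \<and> acgm_stop g \<beta> u \<eta> \<delta> us vs t
            \<longrightarrow> (SUP x\<in>X. acgm_grad g \<beta> u (us (t - 1)) \<bullet> (us (t - 1) - x)) \<le> \<eta>)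
    \<and> (\<forall>\<sigma>::real. \<sigma> \<ge> 0
          \<and> (\<forall>t\<ge>1. \<delta> t = \<sigma> * \<beta> * (diameter X)\<^sup>2 / real t)
          \<and> (\<forall>t\<ge>1. (\<forall>j\<in>{1..t}. \<not> acgm_stop g \<beta> u \<eta> \<delta> us vs j) \<longrightarrow>
                acgm_phi g \<beta> u (us t) \<le> acgm_phi g \<beta> u
                  (((real t - 1) / (real t + 1)) *\<^sub>R us (t - 1) + (2 / (real t + 1)) *\<^sub>R vs t))
        \<longrightarrow> (\<forall>t\<ge>1. (\<forall>j\<in>{1..t}. \<not> acgm_stop g \<beta> u \<eta> \<delta> us vs j) \<longrightarrow>
               Min (acgm_gap g \<beta> u us vs ` {1..t+1})
                 \<le> Min ((\<lambda>j. SUP x\<in>X. acgm_grad g \<beta> u (us (j - 1)) \<bullet> (us (j - 1) - x)) ` {1..t+1})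
             \<and> Min ((\<lambda>j. SUP x\<in>X. acgm_grad g \<beta> u (us (j - 1)) \<bullet> (us (j - 1) - x)) ` {1..t+1})
                 \<le> 6 * (\<sigma> + 1) * \<beta> * (diameter X)\<^sup>2 / real t)
          \<and> (\<exists>t\<in>{1..1 + nat \<lceil>(7 * \<sigma> + 6) * \<beta> * (diameter X)\<^sup>2 / \<eta>\<rceil>}.
               (\<forall>j\<in>{1..<t}. \<not> acgm_stop g \<beta> u \<eta> \<delta> us vs j) \<and> acgm_stop g \<beta> u \<eta> \<delta> us vs t))"
proof -
  define phi where "phi = acgm_phi g \<beta> u"
  define gr where "gr = acgm_grad g \<beta> u"
  define stop where "stop = acgm_stop g \<beta> u \<eta> \<delta> us vs"
  define gap where "gap = acgm_gap g \<beta> u us vs"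
  define D where "D = diameter X"
  define S where "S = (\<lambda>j. SUP x\<in>X. acgm_grad g \<beta> u (us (j - 1)) \<bullet> (us (j - 1) - x))"
  have us0: "us 0 = u" using trace unfolding acgm_trace_def by simp
  have V: "vs t \<in> X \<and> (\<forall>x\<in>X. gr (us (t - 1)) \<bullet> (vs t - x) \<le> \<delta> t)"
    if "t \<ge> 1" "\<forall>j\<in>{1..<t}. \<not> stop j" for t
    using trace that unfolding acgm_trace_def gr_def stop_def by blast
  have U: "\<alpha> t \<in> {0..1} \<and> us t = (1 - \<alpha> t) *\<^sub>R us (t - 1) + \<alpha> t *\<^sub>R vs t"
    if "t \<ge> 1" "\<forall>j\<in>{1..t}. \<not> stop j" for t
    using trace that unfolding acgm_trace_def stop_def by blast
  have bnd: "bounded X" using assms(2) by (simp add: compact_imp_bounded)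
  have usX: "us t \<in> X" if "\<forall>j\<in>{1..t}. \<not> stop j" for t
    using that
  proof (induction t)
    case 0 then show ?case using us0 assms(4) by simp
  next
    case (Suc t)
    have a: "us t \<in> X" using Suc by auto
    have b: "vs (Suc t) \<in> X" using V[of "Suc t"] Suc.prems by auto
    have c: "\<alpha> (Suc t) \<in> {0..1} \<and> us (Suc t) = (1 - \<alpha> (Suc t)) *\<^sub>R us t + \<alpha> (Suc t) *\<^sub>R vs (Suc t)"
      using U[of "Suc t"] Suc.prems by auto
    show ?case using c convexD[OF assms(3) a b, of "1 - \<alpha> (Suc t)" "\<alpha> (Suc t)"] by auto
  qed
  have bdd: "bdd_above ((\<lambda>x. gr a \<bullet> (a - x)) ` X)" for a
  proof -
    have "compact ((\<lambda>x. gr a \<bullet> (a - x)) ` X)"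
      by (intro compact_continuous_image assms(2)) (intro continuous_intros)
    then show ?thesis by (simp add: compact_imp_bounded bounded_imp_bdd_above)
  qed
  have Sle: "S t \<le> gap t + \<delta> t" if "t \<ge> 1" "\<forall>j\<in>{1..<t}. \<not> stop j" for t
    unfolding S_def
  proof (rule cSUP_least[OF assms(1)])
    fix x assume x: "x \<in> X"
    have "gr (us (t - 1)) \<bullet> (vs t - x) \<le> \<delta> t" using V[OF that] x by auto
    then show "acgm_grad g \<beta> u (us (t - 1)) \<bullet> (us (t - 1) - x) \<le> gap t + \<delta> t"
      unfolding gap_def acgm_gap_def gr_def by (simp add: inner_diff_right)
  qed
  have gle: "gap t \<le> S t" if "t \<ge> 1" "\<forall>j\<in>{1..<t}. \<not> stop j" for t
    unfolding S_def gap_def acgm_gap_def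
    using V[OF that] bdd[of "us (t-1)"] unfolding gr_def by (intro cSUP_upper) auto
  have part1: "\<forall>t\<ge>1. (\<forall>j\<in>{1..<t}. \<not> acgm_stop g \<beta> u \<eta> \<delta> us vs j) \<and> acgm_stop g \<beta> u \<eta> \<delta> us vs t
            \<longrightarrow> (SUP x\<in>X. acgm_grad g \<beta> u (us (t - 1)) \<bullet> (us (t - 1) - x)) \<le> \<eta>"
  proof (intro allI impI)
    fix t :: nat assume t: "t \<ge> 1" and h: "(\<forall>j\<in>{1..<t}. \<not> acgm_stop g \<beta> u \<eta> \<delta> us vs j) \<and> acgm_stop g \<beta> u \<eta> \<delta> us vs t"
    have "S t \<le> gap t + \<delta> t" using Sle[OF t] h stop_def by auto
    moreover have "gap t \<le> \<eta> - \<delta> t" using h unfolding acgm_stop_def gap_def by auto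
    ultimately show "(SUP x\<in>X. acgm_grad g \<beta> u (us (t - 1)) \<bullet> (us (t - 1) - x)) \<le> \<eta>"
      unfolding S_def by simp
  qed
  have part2: "\<forall>\<sigma>::real. \<sigma> \<ge> 0
          \<and> (\<forall>t\<ge>1. \<delta> t = \<sigma> * \<beta> * (diameter X)\<^sup>2 / real t)
          \<and> (\<forall>t\<ge>1. (\<forall>j\<in>{1..t}. \<not> acgm_stop g \<beta> u \<eta> \<delta> us vs j) \<longrightarrow>
                acgm_phi g \<beta> u (us t) \<le> acgm_phi g \<beta> u
                  (((real t - 1) / (real t + 1)) *\<^sub>R us (t - 1) + (2 / (real t + 1)) *\<^sub>R vs t))
        \<longrightarrow> (\<forall>t\<ge>1. (\<forall>j\<in>{1..t}. \<not> acgm_stop g \<beta> u \<eta> \<delta> us vs j) \<longrightarrow>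
               Min (acgm_gap g \<beta> u us vs ` {1..t+1})
                 \<le> Min ((\<lambda>j. SUP x\<in>X. acgm_grad g \<beta> u (us (j - 1)) \<bullet> (us (j - 1) - x)) ` {1..t+1})
             \<and> Min ((\<lambda>j. SUP x\<in>X. acgm_grad g \<beta> u (us (j - 1)) \<bullet> (us (j - 1) - x)) ` {1..t+1})
                 \<le> 6 * (\<sigma> + 1) * \<beta> * (diameter X)\<^sup>2 / real t)
          \<and> (\<exists>t\<in>{1..1 + nat \<lceil>(7 * \<sigma> + 6) * \<beta> * (diameter X)\<^sup>2 / \<eta>\<rceil>}.
               (\<forall>j\<in>{1..<t}. \<not> acgm_stop g \<beta> u \<eta> \<delta> us vs j) \<and> acgm_stop g \<beta> u \<eta> \<delta> us vs t)"
  proof (intro allI impI)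
    fix \<sigma> :: real
    assume H: "\<sigma> \<ge> 0
          \<and> (\<forall>t\<ge>1. \<delta> t = \<sigma> * \<beta> * (diameter X)\<^sup>2 / real t)
          \<and> (\<forall>t\<ge>1. (\<forall>j\<in>{1..t}. \<not> acgm_stop g \<beta> u \<eta> \<delta> us vs j) \<longrightarrow>
                acgm_phi g \<beta> u (us t) \<le> acgm_phi g \<beta> u
                  (((real t - 1) / (real t + 1)) *\<^sub>R us (t - 1) + (2 / (real t + 1)) *\<^sub>R vs t))"
    have s0: "\<sigma> \<ge> 0" using H by simp
    define w where "w j = ((real j - 1)/(real j + 1)) *\<^sub>R us (j-1) + (2/(real j+1)) *\<^sub>R vs j" for j
    have dl: "\<delta> t = \<sigma> * \<beta> * D\<^sup>2 / real t" if "t \<ge> 1" for t using H that D_def by simp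
    have cmp: "phi (us t) \<le> phi (w t)" if "t \<ge> 1" "\<forall>j\<in>{1..t}. \<not> stop j" for t
      using H that unfolding phi_def w_def stop_def by blast
    define L where "L = \<beta> * D\<^sup>2"
    define C where "C = (\<sigma>+1) * L"
    have L0: "L \<ge> 0" using assms(5) L_def by simp
    have C0: "C \<ge> 0" using L0 s0 C_def by simp
    have contphi: "continuous_on X phi" unfolding phi_def acgm_phi_def by (intro continuous_intros)
    obtain xs where xs: "xs \<in> X" "\<And>y. y \<in> X \<Longrightarrow> phi xs \<le> phi y"
      using continuous_attains_inf[OF assms(2) assms(1) contphi] by blast
    have stepA: "phi (w j) \<le> phi (us (j-1)) - 2/(real j+1) * (gap j + \<delta> j) + 2*C/(real j*(real j+1))"
      and stepB: "phi (us (j-1)) - phi xs \<le> gap j + \<delta> j"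
      and stepC: "w j \<in> X"
      if j: "j \<ge> 1" "\<forall>i\<in>{1..<j}. \<not> stop i" "us (j-1) \<in> X" for j
    proof -
      define a where "a = us (j-1)"
      define v where "v = vs j"
      define \<gamma> where "\<gamma> = 2/(real j+1)"
      have vX: "v \<in> X" and vd: "\<forall>x\<in>X. gr a \<bullet> (v - x) \<le> \<delta> j" using V[OF j(1,2)] a_def v_def by auto
      have aX: "a \<in> X" using j a_def by simp
      have g01: "0 \<le> \<gamma>" "\<gamma> \<le> 1" using j \<gamma>_def by auto
      have c1: "(real j - 1)/(real j+1) = 1 - \<gamma>" using j \<gamma>_def by (simp add: field_simps)
      have wj: "w j = a + \<gamma> *\<^sub>R (v - a)"
        unfolding w_def c1 a_def[symmetric] v_def[symmetric] \<gamma>_def[symmetric] by (simp add: algebra_simps)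
      show "w j \<in> X"
        using convexD[OF assms(3) aX vX, of "1-\<gamma>" \<gamma>] g01 unfolding w_def c1 a_def v_def \<gamma>_def by simp
      have gapj: "gap j = gr a \<bullet> (a - v)" unfolding gap_def acgm_gap_def gr_def a_def v_def by simp
      have nd: "norm (v - a) \<le> D"
        using diameter_bounded_bound[OF bnd vX aX] D_def by (simp add: dist_norm)
      have nd2: "(norm (v - a))\<^sup>2 \<le> D\<^sup>2" using nd by (simp add: power_mono)
      have "phi (w j) = phi a + gr a \<bullet> (\<gamma> *\<^sub>R (v - a)) + \<beta>/2 * (norm (\<gamma> *\<^sub>R (v - a)))\<^sup>2"
        unfolding wj phi_def gr_def by (rule phi_expand)
      also have "\<dots> = phi a - \<gamma> * gap j + \<beta>/2 * (\<gamma>\<^sup>2 * (norm (v - a))\<^sup>2)"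
      proof -
        have ns: "(norm (\<gamma> *\<^sub>R (v - a)))\<^sup>2 = \<gamma>\<^sup>2 * (norm (v - a))\<^sup>2"
          by (simp add: power_mult_distrib)
        show ?thesis unfolding gapj ns by (simp add: inner_diff_right algebra_simps)
      qed
      also have "\<dots> \<le> phi a - \<gamma> * gap j + \<beta>/2 * (\<gamma>\<^sup>2 * D\<^sup>2)"
        using nd2 assms(5) by (simp add: mult_left_mono)
      finally have e1: "phi (w j) \<le> phi a - \<gamma> * gap j + \<beta>/2 * (\<gamma>\<^sup>2 * D\<^sup>2)" .
      have e2: "\<gamma> * \<delta> j + \<beta>/2 * (\<gamma>\<^sup>2 * D\<^sup>2) \<le> 2*C/(real j*(real j+1))"
        using step_arith[of "real j" \<beta> \<sigma> D] j assms(5) s0 unfolding \<gamma>_def C_def L_def dl[OF j(1)] by simp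
      show "phi (w j) \<le> phi (us (j-1)) - 2/(real j+1) * (gap j + \<delta> j) + 2*C/(real j*(real j+1))"
        using e1 e2 unfolding a_def[symmetric] \<gamma>_def[symmetric] by (simp add: algebra_simps)
      have "phi xs = phi a + gr a \<bullet> (xs - a) + \<beta>/2 * (norm (xs - a))\<^sup>2"
        using phi_expand[of g \<beta> u a "xs - a"] unfolding phi_def gr_def by simp
      then have "phi a - phi xs \<le> gr a \<bullet> (a - xs)" using assms(5) by (simp add: inner_diff_right)
      also have "\<dots> \<le> gap j + \<delta> j" using vd xs(1) unfolding gapj by (force simp: inner_diff_right)
      finally show "phi (us (j-1)) - phi xs \<le> gap j + \<delta> j" using a_def by simp
    qed
    have key: "\<exists>j\<in>{1..t+1}. gap j + \<delta> j \<le> 6*C/real t" if t: "t \<ge> 1" "\<forall>j\<in>{1..t}. \<not> stop j" for t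
    proof -
      define h where "h j = (if j \<le> t then phi (us j) else phi (w j)) - phi xs" for j
      define sq where "sq j = gap j + \<delta> j" for j
      have hyp: "j \<ge> 1 \<and> (\<forall>i\<in>{1..<j}. \<not> stop i) \<and> us (j-1) \<in> X" if "1 \<le> j" "j \<le> t+1" for j
      proof -
        have "\<forall>i\<in>{1..j-1}. \<not> stop i" using that t(2) by auto
        then show ?thesis using that t(2) usX[of "j-1"] by auto
      qed
      show ?thesis unfolding sq_def[symmetric]
      proof (rule abstract_rate[OF C0 t(1)])
        fix j assume j: "1 \<le> j" "j \<le> t+1"
        have hj1: "h (j-1) = phi (us (j-1)) - phi xs" proof -
          have "j - 1 \<le> t" using j by simp
          then show ?thesis unfolding h_def by simp
        qed
        have hj: "h j \<le> phi (w j) - phi xs"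
        proof (cases "j \<le> t")
          case True
          then have "phi (us j) \<le> phi (w j)" using cmp[of j] j t(2) by auto
          then show ?thesis unfolding h_def using True by simp
        next
          case False then show ?thesis unfolding h_def by simp
        qed
        show "h j \<le> h (j-1) - 2/(real j+1) * sq j + 2*C/(real j*(real j+1))"
          using stepA[of j] hyp[OF j] hj hj1 unfolding sq_def by linarith
        show "h (j-1) \<le> sq j" using stepB[of j] hyp[OF j] hj1 unfolding sq_def by linarith
      next
        have "w (t+1) \<in> X" using stepC[of "t+1"] hyp[of "t+1"] by simp
        then show "0 \<le> h (t+1)" unfolding h_def using xs(2) by simp
      qed
    qed
    have main1: "Min (gap ` {1..t+1}) \<le> Min (S ` {1..t+1}) \<and> Min (S ` {1..t+1}) \<le> 6*C/real t"
      if t: "t \<ge> 1" "\<forall>j\<in>{1..t}. \<not> stop j" for t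
    proof -
      have hv: "j \<ge> 1 \<and> (\<forall>i\<in>{1..<j}. \<not> stop i)" if "j \<in> {1..t+1}" for j
        using that t(2) by auto
      have fin: "finite (S ` {1..t+1})" "S ` {1..t+1} \<noteq> {}" by auto
      obtain j0 where j0: "j0 \<in> {1..t+1}" "Min (S ` {1..t+1}) = S j0"
      proof -
        have "Min (S ` {1..t+1}) \<in> S ` {1..t+1}" using Min_in[OF fin] .
        then show ?thesis using that by blast
      qed
      have "Min (gap ` {1..t+1}) \<le> gap j0" using j0(1) by (intro Min_le) auto
      also have "\<dots> \<le> S j0" using gle hv[OF j0(1)] by auto
      finally have m1: "Min (gap ` {1..t+1}) \<le> Min (S ` {1..t+1})" using j0(2) by simp
      obtain j where j: "j \<in> {1..t+1}" "gap j + \<delta> j \<le> 6*C/real t" using key[OF t] by blast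
      have "Min (S ` {1..t+1}) \<le> S j" using j(1) by (intro Min_le) auto
      also have "\<dots> \<le> gap j + \<delta> j" using Sle hv[OF j(1)] by auto
      finally show ?thesis using m1 j(2) by simp
    qed
    have Ceq: "6*C/real t = 6 * (\<sigma> + 1) * \<beta> * (diameter X)\<^sup>2 / real t" for t
      unfolding C_def L_def D_def by (simp add: algebra_simps)
    have nstop: "gap j + \<delta> j > \<eta>" if "\<not> stop j" for j
      using that unfolding stop_def acgm_stop_def gap_def by simp
    define T where "T = 1 + nat \<lceil>(7 * \<sigma> + 6) * \<beta> * (diameter X)\<^sup>2 / \<eta>\<rceil>"
    have ex: "\<exists>j\<in>{1..T}. stop j"
    proof (rule ccontr)
      assume "\<not> (\<exists>j\<in>{1..T}. stop j)"
      then have ns: "\<forall>j\<in>{1..T}. \<not> stop j" by blast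
      define n where "n = nat \<lceil>(7 * \<sigma> + 6) * \<beta> * (diameter X)\<^sup>2 / \<eta>\<rceil>"
      have Tn: "T = n + 1" using T_def n_def by simp
      show False
      proof (cases "n = 0")
        case True
        have "(7 * \<sigma> + 6) * \<beta> * (diameter X)\<^sup>2 / \<eta> \<le> 0"
          using True n_def by simp
        then have "(7 * \<sigma> + 6) * \<beta> * (diameter X)\<^sup>2 \<le> 0" using assms(6) by (simp add: divide_le_0_iff)
        moreover have "(7 * \<sigma> + 6) * \<beta> > 0" using s0 assms(5) by simp
        ultimately have "diameter X = 0" using s0 assms(5) by (auto simp: mult_le_0_iff)
        then have D0: "D = 0" unfolding D_def by simp
        have "(1::nat) \<in> {1..T}" using Tn by simp
        then have ns1: "\<not> stop 1" using ns by blast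
        have v1: "vs 1 \<in> X" using V[of 1] by simp
        have "norm (vs 1 - u) \<le> 0" using diameter_bounded_bound[OF bnd v1 assms(4)] D0 D_def by (simp add: dist_norm)
        then have "vs 1 = u" by simp
        then have "gap 1 = 0" unfolding gap_def acgm_gap_def using us0 by simp
        moreover have "\<delta> 1 = 0" using dl[of 1] D0 by simp
        ultimately show False using nstop[OF ns1] assms(6) by simp
      next
        case False
        then have n1: "n \<ge> 1" by simp
        obtain j where j: "j \<in> {1..n+1}" "gap j + \<delta> j \<le> 6*C/real n"
          using key[OF n1] ns Tn by auto
        have "(7 * \<sigma> + 6) * \<beta> * (diameter X)\<^sup>2 / \<eta> \<le> real n"
          unfolding n_def by (rule real_nat_ceiling_ge)
        then have "(7 * \<sigma> + 6) * L \<le> real n * \<eta>"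
          using assms(6) unfolding L_def D_def by (simp add: divide_le_eq algebra_simps)
        moreover have "6 * C \<le> (7 * \<sigma> + 6) * L" unfolding C_def using L0 s0
          by (simp add: algebra_simps)
        ultimately have "6 * C / real n \<le> \<eta>" using n1 by (simp add: divide_le_eq mult.commute)
        moreover have "j \<in> {1..T}" using j(1) Tn by simp
        then have "\<not> stop j" using ns by blast
        then have "gap j + \<delta> j > \<eta>" by (rule nstop)
        ultimately show False using j(2) by linarith
      qed
    qed
    define P where "P j \<longleftrightarrow> 1 \<le> j \<and> stop j" for j
    obtain j1 where j1: "j1 \<in> {1..T}" "stop j1" using ex by blast
    have Pj1: "P j1" using j1 P_def by simp
    define j0 where "j0 = (LEAST j. P j)"
    have Pj0: "P j0" unfolding j0_def by (rule LeastI[of P, OF Pj1])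
    have j0le: "j0 \<le> j1" unfolding j0_def by (rule Least_le[of P, OF Pj1])
    have before: "\<forall>i\<in>{1..<j0}. \<not> stop i"
    proof
      fix i assume i: "i \<in> {1..<j0}"
      then have "i < (LEAST j. P j)" unfolding j0_def by simp
      then have "\<not> P i" by (rule not_less_Least)
      then show "\<not> stop i" using i unfolding P_def by simp
    qed
    have j0T: "j0 \<in> {1..T}" using Pj0 j0le j1(1) unfolding P_def by simp
    have sj0: "stop j0" using Pj0 unfolding P_def by simp
    have ex2: "\<exists>t\<in>{1..T}. (\<forall>j\<in>{1..<t}. \<not> stop j) \<and> stop t"
      using j0T before sj0 by blast
    show "(\<forall>t\<ge>1. (\<forall>j\<in>{1..t}. \<not> acgm_stop g \<beta> u \<eta> \<delta> us vs j) \<longrightarrow>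
               Min (acgm_gap g \<beta> u us vs ` {1..t+1})
                 \<le> Min ((\<lambda>j. SUP x\<in>X. acgm_grad g \<beta> u (us (j - 1)) \<bullet> (us (j - 1) - x)) ` {1..t+1})
             \<and> Min ((\<lambda>j. SUP x\<in>X. acgm_grad g \<beta> u (us (j - 1)) \<bullet> (us (j - 1) - x)) ` {1..t+1})
                 \<le> 6 * (\<sigma> + 1) * \<beta> * (diameter X)\<^sup>2 / real t)
          \<and> (\<exists>t\<in>{1..1 + nat \<lceil>(7 * \<sigma> + 6) * \<beta> * (diameter X)\<^sup>2 / \<eta>\<rceil>}.
               (\<forall>j\<in>{1..<t}. \<not> acgm_stop g \<beta> u \<eta> \<delta> us vs j) \<and> acgm_stop g \<beta> u \<eta> \<delta> us vs t)"
    proof (rule conjI)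
      show "\<exists>t\<in>{1..1 + nat \<lceil>(7 * \<sigma> + 6) * \<beta> * (diameter X)\<^sup>2 / \<eta>\<rceil>}.
               (\<forall>j\<in>{1..<t}. \<not> acgm_stop g \<beta> u \<eta> \<delta> us vs j) \<and> acgm_stop g \<beta> u \<eta> \<delta> us vs t"
        using ex2 unfolding T_def stop_def .
    next
      show "\<forall>t\<ge>1. (\<forall>j\<in>{1..t}. \<not> acgm_stop g \<beta> u \<eta> \<delta> us vs j) \<longrightarrow>
               Min (acgm_gap g \<beta> u us vs ` {1..t+1})
                 \<le> Min ((\<lambda>j. SUP x\<in>X. acgm_grad g \<beta> u (us (j - 1)) \<bullet> (us (j - 1) - x)) ` {1..t+1})
             \<and> Min ((\<lambda>j. SUP x\<in>X. acgm_grad g \<beta> u (us (j - 1)) \<bullet> (us (j - 1) - x)) ` {1..t+1})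
                 \<le> 6 * (\<sigma> + 1) * \<beta> * (diameter X)\<^sup>2 / real t"
      proof (intro allI impI)
        fix t :: nat assume t1: "t \<ge> 1" and nt: "\<forall>j\<in>{1..t}. \<not> acgm_stop g \<beta> u \<eta> \<delta> us vs j"
        have "Min (gap ` {1..t+1}) \<le> Min (S ` {1..t+1}) \<and> Min (S ` {1..t+1}) \<le> 6*C/real t"
          using main1[OF t1] nt unfolding stop_def by blast
        then show "Min (acgm_gap g \<beta> u us vs ` {1..t+1})
                 \<le> Min ((\<lambda>j. SUP x\<in>X. acgm_grad g \<beta> u (us (j - 1)) \<bullet> (us (j - 1) - x)) ` {1..t+1})
             \<and> Min ((\<lambda>j. SUP x\<in>X. acgm_grad g \<beta> u (us (j - 1)) \<bullet> (us (j - 1) - x)) ` {1..t+1})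
                 \<le> 6 * (\<sigma> + 1) * \<beta> * (diameter X)\<^sup>2 / real t"
          unfolding Ceq S_def gap_def .
      qed
    qed
  qed
  show ?thesis using part1 part2 by blast
qed

end
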